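(* Let $C$ be a homogeneous lift of a marked point $c\in\mathbb{C}(t)$ with $c\notin\{0,1,t,\infty\}$. Set $F_1=F_{t_1,t_2}(C)/\gcd(F_{t_1,t_2}(C))=:(P_1,Q_1)$. Then $d:=\deg F_1\ge2$, $P_1(0,1)\ne0$, $P_1(1,0)\ne0$, $P_1(1,1)\ne Q_1(1,1)$, and $Q_1(1,0)=0$. Furthermore, for all $n\ge1$, the map $F_{n+1}=F_{t_1,t_2}(F_n)/t_2^2$ has nonzero resultant and degree $\deg F_{n+1}=4^nd$.
   Context: $F_{t_1,t_2}(z,w)=\big((t_1w^2-t_2z^2)^2,\;4t_2zw(w-z)(t_1w-t_2z)\big)$. A homogeneous lift of $c$ is a pair $C=(c_1,c_2)$ of homogeneous polynomials in $(t_1,t_2)$ of the same degree with no common factor such that $c(t)=c_1(t,1)/c_2(t,1)$. For a pair $F=(P,Q)$ of homogeneous polynomials of the same degree, $\deg F$ is that degree, $\gcd(F)$ is the gcd of $P,Q$, $F_{t_1,t_2}(F)$ means substituting $(z,w)=(P,Q)$, and the resultant is that of the pair $(P,Q)$ (Sylvester determinant). *)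

theory Defs
  imports "HOL-Computational_Algebra.Computational_Algebra" "HOL-Computational_Algebra.Field_as_Ring" "Subresultants.Resultant_Prelim"
begin

text \<open>Bivariate polynomials in (t1,t2) over the complex numbers are represented as
  complex poly poly: the outer variable is t2, the coefficients are polynomials in t1.\<close>

type_synonym bipoly = "complex poly poly"

definition T1 :: bipoly where "T1 = [:[:0, 1:]:]"
definition T2 :: bipoly where "T2 = [:0, 1:]"

definition eval2 :: "bipoly \<Rightarrow> complex \<Rightarrow> complex \<Rightarrow> complex" where
  "eval2 P a b = poly (poly P [:b:]) a"

definition bcoeff :: "bipoly \<Rightarrow> nat \<Rightarrow> nat \<Rightarrow> complex" where
  "bcoeff P i j = coeff (coeff P j) i"

definition homogeneous :: "bipoly \<Rightarrow> nat \<Rightarrow> bool" where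
  "homogeneous P d \<longleftrightarrow> (\<forall>i j. bcoeff P i j \<noteq> 0 \<longrightarrow> i + j = d)"

definition hom_pair :: "bipoly \<times> bipoly \<Rightarrow> nat \<Rightarrow> bool" where
  "hom_pair F d \<longleftrightarrow> homogeneous (fst F) d \<and> homogeneous (snd F) d \<and> F \<noteq> (0, 0)"

definition hdeg :: "bipoly \<times> bipoly \<Rightarrow> nat" where
  "hdeg F = (THE d. hom_pair F d)"

definition pgcd :: "bipoly \<times> bipoly \<Rightarrow> bipoly" where
  "pgcd F = gcd (fst F) (snd F)"

definition pair_div :: "bipoly \<times> bipoly \<Rightarrow> bipoly \<Rightarrow> bipoly \<times> bipoly" where
  "pair_div F g = (fst F div g, snd F div g)"

definition Fmap :: "bipoly \<times> bipoly \<Rightarrow> bipoly \<times> bipoly" where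
  "Fmap F = (let z = fst F; w = snd F in
     ((T1 * w^2 - T2 * z^2)^2, 4 * T2 * z * w * (w - z) * (T1 * w - T2 * z)))"

definition dehom :: "bipoly \<Rightarrow> complex poly" where
  "dehom P = poly P 1"

text \<open>Resultant of a homogeneous pair of degree d: the Sylvester determinant of the
  two binary forms of degree d (coefficient of t1^i t2^(d-i) = i-th coefficient of P(t,1)).\<close>
definition hresultant :: "bipoly \<times> bipoly \<Rightarrow> complex" where
  "hresultant F = det (sylvester_mat_sub (hdeg F) (hdeg F) (dehom (fst F)) (dehom (snd F)))"

definition hom_lift :: "bipoly \<times> bipoly \<Rightarrow> complex poly fract \<Rightarrow> bool" where
  "hom_lift C c \<longleftrightarrow> (\<exists>k. homogeneous (fst C) k \<and> homogeneous (snd C) k) \<and>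
     coprime (fst C) (snd C) \<and> dehom (snd C) \<noteq> 0 \<and>
     c = Fract (dehom (fst C)) (dehom (snd C))"

fun Fiter :: "bipoly \<times> bipoly \<Rightarrow> nat \<Rightarrow> bipoly \<times> bipoly" where
  "Fiter C 0 = C"
| "Fiter C (Suc 0) = pair_div (Fmap C) (pgcd (Fmap C))"
| "Fiter C (Suc (Suc n)) = pair_div (Fmap (Fiter C (Suc n))) (T2^2)"

end

theory Submission
  imports Defs "Subresultants.Subresultant_Gcd"
begin


definition cst :: "complex \<Rightarrow> bipoly" where "cst c = [:[:c:]:]"

definition scale :: "complex \<Rightarrow> bipoly \<Rightarrow> bipoly" where
  "scale a P = pcompose (map_poly (\<lambda>q. pcompose q [:0,a:]) P) [:0,[:a:]:]"

lemma const_pow: "[:a:]^j = [:a^j:]" by (induct j) (auto simp: mult.commute)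

lemma bcoeff_scale: "bcoeff (scale a P) i j = a^(i+j) * bcoeff P i j"
  unfolding scale_def bcoeff_def
  by (simp add: coeff_pcompose_linear coeff_map_poly power_add mult_ac const_pow)

lemma scale_mult: "scale a (P * Q) = scale a P * scale a Q"
proof -
  interpret m: map_poly_comm_ring_hom "\<lambda>q. pcompose q [:0,a:]" ..
  show ?thesis unfolding scale_def by (simp add: m.hom_mult pcompose_mult)
qed

lemma bpoly_eqI: "(\<And>i j. bcoeff P i j = bcoeff Q i j) \<Longrightarrow> P = Q"
  unfolding bcoeff_def by (simp add: poly_eq_iff)

lemma bcoeff_cst_mult: "bcoeff (cst c * P) i j = c * bcoeff P i j"
  unfolding bcoeff_def cst_def by simp

lemma bcoeff_add[simp]: "bcoeff (P + Q) i j = bcoeff P i j + bcoeff Q i j"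
  unfolding bcoeff_def by simp
lemma bcoeff_diff[simp]: "bcoeff (P - Q) i j = bcoeff P i j - bcoeff Q i j"
  unfolding bcoeff_def by simp
lemma bcoeff_minus[simp]: "bcoeff (- P) i j = - bcoeff P i j"
  unfolding bcoeff_def by simp
lemma bcoeff_0[simp]: "bcoeff 0 i j = 0"
  unfolding bcoeff_def by simp

lemma bpoly_nonzero_coeff: "P \<noteq> 0 \<Longrightarrow> \<exists>i j. bcoeff P i j \<noteq> 0"
  using bpoly_eqI[of P 0] by auto

lemma scale_mult_scale: "scale a (scale b P) = scale (a*b) P"
  by (rule bpoly_eqI) (simp add: bcoeff_scale power_mult_distrib)

lemma scale_1: "scale 1 P = P"
  by (rule bpoly_eqI) (simp add: bcoeff_scale)

lemma scale_dvd: "X dvd Y \<Longrightarrow> scale a X dvd scale a Y"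
  by (auto simp: scale_mult)

lemma cst_mult: "cst a * cst b = cst (a*b)" unfolding cst_def by simp

lemma pow2_inj: "(2::complex)^a = 2^b \<Longrightarrow> a = b"
proof -
  assume "(2::complex)^a = 2^b"
  hence "of_nat (2^a) = (of_nat (2^b) :: complex)" by simp
  hence "(2::nat)^a = 2^b" using of_nat_eq_iff by blast
  thus "a = b" by simp
qed

lemma homogeneous_scale_iff: "homogeneous P n \<longleftrightarrow> scale 2 P = cst (2^n) * P"
proof
  assume h: "homogeneous P n"
  show "scale 2 P = cst (2^n) * P"
  proof (rule bpoly_eqI)
    fix i j show "bcoeff (scale 2 P) i j = bcoeff (cst (2 ^ n) * P) i j"
      using h unfolding homogeneous_def bcoeff_scale bcoeff_cst_mult
      by (cases "bcoeff P i j = 0") auto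
  qed
next
  assume h: "scale 2 P = cst (2^n) * P"
  show "homogeneous P n" unfolding homogeneous_def
  proof (intro allI impI)
    fix i j assume nz: "bcoeff P i j \<noteq> 0"
    have "bcoeff (scale 2 P) i j = bcoeff (cst (2^n) * P) i j" using h by simp
    hence "(2::complex)^(i+j) * bcoeff P i j = 2^n * bcoeff P i j"
      unfolding bcoeff_scale bcoeff_cst_mult .
    hence "(2::complex)^(i+j) = 2^n" using nz by simp
    thus "i + j = n" by (rule pow2_inj)
  qed
qed

lemma homogeneous_mult: "homogeneous P a \<Longrightarrow> homogeneous Q b \<Longrightarrow> homogeneous (P*Q) (a+b)"
  unfolding homogeneous_scale_iff scale_mult
  by (simp add: power_add cst_mult[symmetric] mult_ac)

lemma homogeneous_add: "homogeneous P a \<Longrightarrow> homogeneous Q a \<Longrightarrow> homogeneous (P+Q) a"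
  unfolding homogeneous_def by (metis add.left_neutral add.right_neutral bcoeff_add)
lemma homogeneous_diff: "homogeneous P a \<Longrightarrow> homogeneous Q a \<Longrightarrow> homogeneous (P-Q) a"
  unfolding homogeneous_def by (metis diff_zero diff_self bcoeff_diff eq_iff_diff_eq_0)
lemma homogeneous_0[simp]: "homogeneous 0 a"
  unfolding homogeneous_def by simp

lemma homogeneous_cst: "homogeneous (cst c) 0"
  unfolding homogeneous_def bcoeff_def cst_def by (auto simp: coeff_pCons split: nat.splits)

lemma homogeneous_numeral: "homogeneous (numeral k) 0"
proof -
  have "(numeral k :: bipoly) = cst (numeral k)" unfolding cst_def by (simp add: numeral_poly)
  thus ?thesis using homogeneous_cst[of "numeral k"] by metis
qed

lemma homogeneous_T1: "homogeneous T1 1"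
  unfolding homogeneous_def bcoeff_def T1_def by (auto simp: coeff_pCons split: nat.splits)
lemma homogeneous_T2: "homogeneous T2 1"
  unfolding homogeneous_def bcoeff_def T2_def by (auto simp: coeff_pCons split: nat.splits)

lemma homogeneous_power: "homogeneous P a \<Longrightarrow> homogeneous (P^k) (k*a)"
proof (induct k)
  case 0 have "(1::bipoly) = cst 1" by (simp add: cst_def pCons_one)
  thus ?case using homogeneous_cst[of 1] by simp
next
  case (Suc k) thus ?case using homogeneous_mult[of P a "P^k" "k*a"] by simp
qed

lemma homogeneous_deg_unique: "homogeneous P a \<Longrightarrow> homogeneous P b \<Longrightarrow> P \<noteq> 0 \<Longrightarrow> a = b"
  unfolding homogeneous_def using bpoly_nonzero_coeff by metis



lemma dehom_mult[simp]: "dehom (P*Q) = dehom P * dehom Q" unfolding dehom_def by simp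
lemma dehom_add[simp]: "dehom (P+Q) = dehom P + dehom Q" unfolding dehom_def by simp
lemma dehom_diff[simp]: "dehom (P-Q) = dehom P - dehom Q" unfolding dehom_def by simp
lemma dehom_minus[simp]: "dehom (-P) = - dehom P" unfolding dehom_def by simp
lemma dehom_power[simp]: "dehom (P^k) = dehom P ^ k" unfolding dehom_def by simp
lemma dehom_numeral[simp]: "dehom (numeral k) = numeral k" unfolding dehom_def by simp
lemma dehom_0[simp]: "dehom 0 = 0" unfolding dehom_def by simp
lemma dehom_1[simp]: "dehom 1 = 1" unfolding dehom_def by simp
lemma dehom_T1[simp]: "dehom T1 = [:0,1:]" unfolding dehom_def T1_def by simp
lemma dehom_T2[simp]: "dehom T2 = 1" unfolding dehom_def T2_def by simp
lemma dehom_cst[simp]: "dehom (cst c) = [:c:]" unfolding dehom_def cst_def by simp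

lemma coeff_dehom: "coeff (dehom P) i = (\<Sum>j\<le>degree P. bcoeff P i j)"
  unfolding dehom_def bcoeff_def poly_altdef by (simp add: coeff_sum)

lemma hom_bcoeff: "homogeneous P n \<Longrightarrow> bcoeff P i j = (if i + j = n then bcoeff P i j else 0)"
  unfolding homogeneous_def by auto

lemma coeff_dehom_hom:
  assumes h: "homogeneous P n"
  shows "coeff (dehom P) i = (if i \<le> n then bcoeff P i (n-i) else 0)"
proof -
  have "(\<Sum>j\<le>degree P. bcoeff P i j) = (\<Sum>j\<le>degree P. if j = n - i then (if i \<le> n then bcoeff P i (n-i) else 0) else 0)"
    apply (rule sum.cong, simp) apply (subst hom_bcoeff[OF h]) by auto
  also have "\<dots> = (if n - i \<le> degree P then (if i \<le> n then bcoeff P i (n-i) else 0) else 0)"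
    by (subst sum.delta) auto
  also have "\<dots> = (if i \<le> n then bcoeff P i (n-i) else 0)"
    by (auto simp: bcoeff_def coeff_eq_0)
  finally show ?thesis by (simp add: coeff_dehom)
qed

lemma degree_dehom_hom: "homogeneous P n \<Longrightarrow> degree (dehom P) \<le> n"
  by (rule degree_le) (simp add: coeff_dehom_hom)

lemma dehom_hom_unique:
  assumes "homogeneous P n" "homogeneous Q n" "dehom P = dehom Q"
  shows "P = Q"
proof (rule bpoly_eqI)
  fix i j
  show "bcoeff P i j = bcoeff Q i j"
  proof (cases "i + j = n")
    case True
    hence "bcoeff P i j = coeff (dehom P) i" "bcoeff Q i j = coeff (dehom Q) i"
      using coeff_dehom_hom[OF assms(1), of i] coeff_dehom_hom[OF assms(2), of i] by auto
    thus ?thesis using assms(3) by simp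
  next
    case False thus ?thesis using assms(1,2) unfolding homogeneous_def by metis
  qed
qed

lemma dehom_eq_0: "homogeneous P n \<Longrightarrow> dehom P = 0 \<Longrightarrow> P = 0"
  using dehom_hom_unique[of P n 0] by simp

definition hpoly :: "nat \<Rightarrow> complex poly \<Rightarrow> bipoly" where
  "hpoly n p = (\<Sum>i\<le>n. monom (monom (coeff p i) i) (n - i))"

lemma bcoeff_hpoly: "bcoeff (hpoly n p) i j = (if i \<le> n \<and> j = n - i then coeff p i else 0)"
proof -
  have c1: "coeff (hpoly n p) j = (\<Sum>k\<le>n. if n - k = j then monom (coeff p k) k else 0)"
    unfolding hpoly_def by (simp add: coeff_sum coeff_monom)
  have "bcoeff (hpoly n p) i j = (\<Sum>k\<le>n. if n - k = j then (if k = i then coeff p i else 0) else 0)"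
    unfolding bcoeff_def c1 coeff_sum by (rule sum.cong) (auto simp: coeff_monom)
  also have "\<dots> = (\<Sum>k\<le>n. if k = i then (if n - i = j then coeff p i else 0) else 0)"
    by (rule sum.cong) auto
  also have "\<dots> = (if i \<le> n \<and> j = n - i then coeff p i else 0)"
    by (subst sum.delta) auto
  finally show ?thesis .
qed

lemma homogeneous_hpoly: "homogeneous (hpoly n p) n"
  unfolding homogeneous_def bcoeff_hpoly by (auto split: if_splits)

lemma dehom_hpoly: "degree p \<le> n \<Longrightarrow> dehom (hpoly n p) = p"
  by (rule poly_eqI) (auto simp: coeff_dehom_hom[OF homogeneous_hpoly] bcoeff_hpoly coeff_eq_0)

lemma eval2_mult[simp]: "eval2 (P*Q) a b = eval2 P a b * eval2 Q a b" unfolding eval2_def by simp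
lemma eval2_add[simp]: "eval2 (P+Q) a b = eval2 P a b + eval2 Q a b" unfolding eval2_def by simp
lemma eval2_diff[simp]: "eval2 (P-Q) a b = eval2 P a b - eval2 Q a b" unfolding eval2_def by simp
lemma eval2_power[simp]: "eval2 (P^k) a b = eval2 P a b ^ k" unfolding eval2_def by simp
lemma eval2_numeral[simp]: "eval2 (numeral k) a b = numeral k" unfolding eval2_def by simp
lemma eval2_0[simp]: "eval2 0 a b = 0" unfolding eval2_def by simp
lemma eval2_T1[simp]: "eval2 T1 a b = a" unfolding eval2_def T1_def by simp
lemma eval2_T2[simp]: "eval2 T2 a b = b" unfolding eval2_def T2_def by simp

lemma eval2_a1: "eval2 P a 1 = poly (dehom P) a"
  unfolding eval2_def dehom_def by (simp add: pCons_one)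

lemma eval2_10:
  assumes h: "homogeneous P n"
  shows "eval2 P 1 0 = coeff (dehom P) n"
proof -
  have "eval2 P 1 0 = (\<Sum>i\<le>degree (coeff P 0). bcoeff P i 0)"
    unfolding eval2_def bcoeff_def by (simp add: poly_altdef[of _ 1] poly_0_coeff_0)
  also have "\<dots> = (\<Sum>i\<le>degree (coeff P 0). if i = n then bcoeff P n 0 else 0)"
    apply (rule sum.cong, simp) apply (subst hom_bcoeff[OF h]) by auto
  also have "\<dots> = bcoeff P n 0"
    by (subst sum.delta) (auto simp: bcoeff_def coeff_eq_0)
  also have "\<dots> = coeff (dehom P) n" using coeff_dehom_hom[OF h, of n] by simp
  finally show ?thesis .
qed

lemma dehom_unit: "is_unit X \<Longrightarrow> is_unit (dehom X)"
  by (metis dehom_1 dehom_mult dvdE dvdI)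

lemma not_unit_lin: "\<not> is_unit (T1 - cst a * T2)"
proof
  assume "is_unit (T1 - cst a * T2)"
  hence "is_unit (dehom (T1 - cst a * T2))" by (rule dehom_unit)
  hence "is_unit [:-a, 1:]" by simp
  thus False unfolding is_unit_poly_iff by auto
qed

lemma not_unit_T2: "\<not> is_unit T2"
  unfolding is_unit_poly_iff T2_def by auto

lemma lin_factor:
  assumes h: "homogeneous H n" and r: "poly (dehom H) a = 0"
  shows "(T1 - cst a * T2) dvd H"
proof (cases "H = 0")
  case True thus ?thesis by simp
next
  case False
  hence nz: "dehom H \<noteq> 0" using dehom_eq_0[OF h] by auto
  from r obtain q where q: "dehom H = [:-a,1:] * q" unfolding poly_eq_0_iff_dvd by (auto elim: dvdE)
  have qnz: "q \<noteq> 0" using nz q by auto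
  have "degree ([:-a,1:] * q) = degree [:-a,1:] + degree q" by (rule degree_mult_eq) (use qnz in auto)
  hence "degree (dehom H) = 1 + degree q" using q by simp
  with degree_dehom_hom[OF h] have dq: "degree q \<le> n - 1" and n1: "n \<ge> 1" by auto
  let ?G = "hpoly (n-1) q"
  have "homogeneous (cst a * T2) (0+1)" by (rule homogeneous_mult[OF homogeneous_cst homogeneous_T2])
  hence hl: "homogeneous (T1 - cst a * T2) 1"
    using homogeneous_diff[OF homogeneous_T1] by simp
  have "homogeneous ((T1 - cst a * T2) * ?G) (1 + (n-1))"
    by (rule homogeneous_mult[OF hl homogeneous_hpoly])
  hence h2: "homogeneous ((T1 - cst a * T2) * ?G) n" using n1 by simp
  have "dehom ((T1 - cst a * T2) * ?G) = dehom H"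
    using q dehom_hpoly[OF dq] by simp
  hence "H = (T1 - cst a * T2) * ?G" using dehom_hom_unique[OF h h2] by simp
  thus ?thesis by simp
qed

lemma t2_factor:
  assumes h: "homogeneous H n" and n1: "n \<ge> 1" and c: "coeff (dehom H) n = 0"
  shows "\<exists>G. homogeneous G (n-1) \<and> H = T2 * G"
proof -
  have "degree (dehom H) \<le> n" by (rule degree_dehom_hom[OF h])
  hence dq: "degree (dehom H) \<le> n - 1"
  proof -
    assume le: "degree (dehom H) \<le> n"
    show ?thesis
    proof (rule ccontr)
      assume "\<not> degree (dehom H) \<le> n - 1"
      hence e: "degree (dehom H) = n" using le by linarith
      hence "dehom H \<noteq> 0" using n1 by auto
      hence "lead_coeff (dehom H) \<noteq> 0" by simp
      thus False using c e by simp
    qed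
  qed
  let ?G = "hpoly (n-1) (dehom H)"
  have "homogeneous (T2 * ?G) (1 + (n-1))" by (rule homogeneous_mult[OF homogeneous_T2 homogeneous_hpoly])
  hence h2: "homogeneous (T2 * ?G) n" using n1 by simp
  have "dehom (T2 * ?G) = dehom H" using dehom_hpoly[OF dq] by simp
  hence "H = T2 * ?G" using dehom_hom_unique[OF h h2] by simp
  thus ?thesis using homogeneous_hpoly by blast
qed

lemma t2_dvd:
  assumes h: "homogeneous H n" and c: "coeff (dehom H) n = 0"
  shows "T2 dvd H"
proof (cases "n = 0")
  case True
  have "degree (dehom H) \<le> 0" using degree_dehom_hom[OF h] True by simp
  hence "lead_coeff (dehom H) = 0" using c True by simp
  hence "dehom H = 0" by simp
  hence "H = 0" using dehom_eq_0[OF h] by simp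
  thus ?thesis by simp
next
  case False thus ?thesis using t2_factor[OF h _ c] by auto
qed

lemma no_common_zero:
  assumes hP: "homogeneous P n" and hQ: "homogeneous Q n" and cop: "coprime P Q"
  shows "\<not> (poly (dehom P) a = 0 \<and> poly (dehom Q) a = 0)"
    and "\<not> (coeff (dehom P) n = 0 \<and> coeff (dehom Q) n = 0)"
  using coprime_common_divisor[OF cop lin_factor[OF hP] lin_factor[OF hQ]] not_unit_lin apply blast
  using coprime_common_divisor[OF cop t2_dvd[OF hP] t2_dvd[OF hQ]] not_unit_T2 by blast



lemma hom_scale: "homogeneous P n \<Longrightarrow> scale a P = cst (a^n) * P"
  by (rule bpoly_eqI) (auto simp: bcoeff_scale bcoeff_cst_mult homogeneous_def)

lemma cst_nz_dvd: "c \<noteq> 0 \<Longrightarrow> X dvd cst c * P \<Longrightarrow> X dvd P"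
proof -
  assume c: "c \<noteq> 0" "X dvd cst c * P"
  have "cst (1/c) * cst c = 1" using c by (simp add: cst_mult cst_def pCons_one)
  hence eq: "cst (1/c) * (cst c * P) = P" by (simp add: mult.assoc[symmetric])
  have "X dvd cst (1/c) * (cst c * P)" using c(2) by (rule dvd_mult)
  thus ?thesis by (simp only: eq)
qed

lemma homogeneous_cofactor:
  assumes h: "homogeneous (g*X) N" and hg: "homogeneous g m" and g0: "g \<noteq> 0"
  shows "homogeneous X (N - m)"
proof -
  have a1: "g * (cst (2^N) * X) = scale 2 (g*X)" using hom_scale[OF h] by (simp add: mult_ac)
  have a2: "g * (cst (2^m) * scale 2 X) = scale 2 (g*X)" using hom_scale[OF hg] by (simp add: scale_mult mult_ac)
  have "g * (cst (2^m) * scale 2 X) = g * (cst (2^N) * X)" using a2 a1 by (rule trans[OF _ sym])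
  hence e: "cst (2^m) * scale 2 X = cst (2^N) * X" using g0 by simp
  show ?thesis unfolding homogeneous_def
  proof (intro allI impI)
    fix i j assume nz: "bcoeff X i j \<noteq> 0"
    have "bcoeff (cst (2^m) * scale 2 X) i j = bcoeff (cst (2^N) * X) i j" using e by simp
    hence "(2::complex)^m * (2^(i+j) * bcoeff X i j) = 2^N * bcoeff X i j"
      unfolding bcoeff_cst_mult bcoeff_scale .
    hence "(2::complex)^(m+(i+j)) = 2^N" using nz by (simp add: power_add)
    hence "m + (i+j) = N" by (rule pow2_inj)
    thus "i + j = N - m" by simp
  qed
qed

lemma gcd_homogeneous:
  assumes hP: "homogeneous P N" and hQ: "homogeneous Q N" and nz: "\<not> (P = 0 \<and> Q = 0)"
  shows "\<exists>m. homogeneous (gcd P Q) m"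
proof -
  define g where "g = gcd P Q"
  have g0: "g \<noteq> 0" using nz unfolding g_def by auto
  have sd: "scale a g dvd g" if a: "a \<noteq> 0" for a
  proof -
    have an: "a^N \<noteq> 0" using a by simp
    have "scale a g dvd scale a P" unfolding g_def by (rule scale_dvd) simp
    hence "scale a g dvd cst (a^N) * P" by (simp only: hom_scale[OF hP, of a])
    hence "scale a g dvd P" by (rule cst_nz_dvd[OF an])
    moreover have "scale a g dvd scale a Q" unfolding g_def by (rule scale_dvd) simp
    hence "scale a g dvd cst (a^N) * Q" by (simp only: hom_scale[OF hQ, of a])
    hence "scale a g dvd Q" by (rule cst_nz_dvd[OF an])
    ultimately show ?thesis unfolding g_def by simp
  qed
  have d1: "scale 2 g dvd g" using sd[of 2] by simp
  have "scale 2 (scale (1/2) g) dvd scale 2 g" by (rule scale_dvd[OF sd]) simp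
  hence d2: "g dvd scale 2 g" by (simp add: scale_mult_scale scale_1)
  obtain u where u: "scale 2 g = g * u" using d2 by (auto elim: dvdE)
  obtain v where v: "g = scale 2 g * v" using d1 by (auto elim: dvdE)
  have "g * 1 = g * (u * v)" using u v by (simp add: mult.assoc[symmetric])
  hence uv: "u * v = 1" using g0 mult_cancel_left[of g 1 "u*v"] by simp
  have "is_unit u" by (rule dvdI[of 1 u v]) (simp add: uv)
  then obtain u0 where u0: "u = [:u0:]" "is_unit u0" unfolding is_unit_poly_iff by auto
  then obtain c where c: "u0 = [:c:]" unfolding is_unit_poly_iff by auto
  have "u = cst c" using u0 c by (simp add: cst_def)
  hence sg: "scale 2 g = cst c * g" using u by (simp only: mult.commute)
  have key: "bcoeff g i j \<noteq> 0 \<Longrightarrow> (2::complex)^(i+j) = c" for i j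
  proof -
    assume nz: "bcoeff g i j \<noteq> 0"
    have "bcoeff (scale 2 g) i j = bcoeff (cst c * g) i j" using sg by simp
    thus ?thesis using nz unfolding bcoeff_scale bcoeff_cst_mult by simp
  qed
  obtain i0 j0 where ij0: "bcoeff g i0 j0 \<noteq> 0" using bpoly_nonzero_coeff[OF g0] by auto
  have "homogeneous g (i0+j0)" unfolding homogeneous_def
  proof (intro allI impI)
    fix i j assume "bcoeff g i j \<noteq> 0"
    hence "(2::complex)^(i+j) = 2^(i0+j0)" using key ij0 by simp
    thus "i + j = i0 + j0" by (rule pow2_inj)
  qed
  thus ?thesis unfolding g_def by blast
qed



lemma degree_sq: "degree ((z::complex poly)^2) = 2 * degree z"
  by (cases "z = 0") (simp_all add: degree_power_eq)

lemma deg_A: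
  fixes z w :: "complex poly" assumes w: "w \<noteq> 0"
  shows "degree ([:0,1:]*w^2 - z^2) = (if degree z \<le> degree w then 2*degree w + 1 else 2*degree z)"
proof -
  have d1: "degree ([:0,1:]*w^2) = 2*degree w + 1"
    using w by (simp add: degree_mult_eq degree_power_eq)
  have d2: "degree (z^2) = 2*degree z" by (rule degree_sq)
  show ?thesis
  proof (cases "degree z \<le> degree w")
    case True
    have "degree ([:0,1:]*w^2 + - (z^2)) = degree ([:0,1:]*w^2)"
      by (rule degree_add_eq_left) (use True d1 d2 in simp)
    thus ?thesis using True d1 by simp
  next
    case False
    have "degree (- (z^2) + [:0,1:]*w^2) = degree (- (z^2))"
      by (rule degree_add_eq_left) (use False d1 d2 in simp)
    thus ?thesis using False d2 by (simp add: add.commute)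
  qed
qed

lemma A_nz: "(w::complex poly) \<noteq> 0 \<Longrightarrow> [:0,1:]*w^2 - z^2 \<noteq> 0"
proof
  assume w: "w \<noteq> 0" and e: "[:0,1:]*w^2 - z^2 = 0"
  have "degree ([:0,1:]*w^2 - z^2) = (if degree z \<le> degree w then 2*degree w + 1 else 2*degree z)"
    by (rule deg_A[OF w])
  hence "degree z > degree w" using e by (auto split: if_splits)
  hence "z^2 = 0" using e \<open>degree ([:0,1:]*w^2 - z^2) = _\<close> by auto
  hence "z = 0" by simp
  thus False using \<open>degree z > degree w\<close> by simp
qed

lemma degQ_lt:
  fixes z w :: "complex poly" assumes w: "w \<noteq> 0" and z: "z \<noteq> 0"
  shows "degree (4*z*w*(w-z)*([:0,1:]*w - z)) < degree (([:0,1:]*w^2 - z^2)^2)"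
proof -
  have A: "[:0,1:]*w^2 - z^2 \<noteq> 0" by (rule A_nz[OF w])
  have dP: "degree (([:0,1:]*w^2 - z^2)^2) = 2 * degree ([:0,1:]*w^2 - z^2)"
    by (rule degree_sq)
  have "degree (4*z*w*(w-z)*([:0,1:]*w - z)) \<le> degree (4*z*w*(w-z)) + degree ([:0,1:]*w - z)"
    by (rule degree_mult_le)
  also have "degree (4*z*w*(w-z)) \<le> degree (4*z*w) + degree (w-z)" by (rule degree_mult_le)
  also have "degree (4*z*w) \<le> degree (4*z) + degree w" by (rule degree_mult_le)
  also have "degree (4*z) \<le> degree (4::complex poly) + degree z" by (rule degree_mult_le)
  finally have dQ: "degree (4*z*w*(w-z)*([:0,1:]*w - z)) \<le> degree z + degree w + degree (w-z) + degree ([:0,1:]*w - z)"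
    by simp
  have e1: "degree (w - z) \<le> max (degree w) (degree z)" by (rule degree_diff_le_max)
  have "degree ([:0,1:]*w - z) \<le> max (degree ([:0,1:]*w)) (degree z)" by (rule degree_diff_le_max)
  hence e2: "degree ([:0,1:]*w - z) \<le> max (degree w + 1) (degree z)" using w by (simp add: degree_mult_eq)
  show ?thesis using dQ dP e1 e2 deg_A[OF w, of z] by (auto split: if_splits)
qed

lemma order_sq: "p \<noteq> 0 \<Longrightarrow> order a ((p::complex poly)^2) = 2 * order a p"
  by (simp add: power2_eq_square order_mult)

lemma ord0_le:
  fixes z w :: "complex poly"
  assumes nc: "\<not> (poly z 0 = 0 \<and> poly w 0 = 0)" and Q: "4*z*w*(w-z)*([:0,1:]*w - z) \<noteq> 0"
  shows "order 0 (([:0,1:]*w^2 - z^2)^2) \<le> order 0 (4*z*w*(w-z)*([:0,1:]*w - z))"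
proof (cases "poly z 0 = 0")
  case False
  hence "poly (([:0,1:]*w^2 - z^2)^2) 0 \<noteq> 0" by simp
  hence "order 0 (([:0,1:]*w^2 - z^2)^2) = 0" by (rule order_0I)
  thus ?thesis by simp
next
  case True
  hence w0: "poly w 0 \<noteq> 0" using nc by auto
  from True obtain z1 where z1: "z = [:0,1:] * z1" using poly_eq_0_iff_dvd[of z 0] by (auto elim: dvdE)
  define B where "B = w^2 - [:0,1:]*z1^2"
  define R where "R = 4*z1*w*(w-z)*(w - z1)"
  have P: "([:0,1:]*w^2 - z^2)^2 = [:0,1:]^2 * B^2" unfolding B_def z1 by (simp add: algebra_simps power2_eq_square)
  have Qe: "4*z*w*(w-z)*([:0,1:]*w - z) = [:0,1:]^2 * R" unfolding R_def z1 by (simp add: algebra_simps power2_eq_square)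
  have B0: "poly B 0 \<noteq> 0" unfolding B_def using w0 by simp
  hence Bn: "B \<noteq> 0" by auto
  have R0: "R \<noteq> 0" using Q Qe by auto
  have x2: "order 0 ([:0,1:]^2 :: complex poly) = 2" using order_power_n_n[of "0::complex" 2] by simp
  have "order 0 (([:0,1:]*w^2 - z^2)^2) = 2"
    unfolding P using Bn order_mult[of "[:0,1:]^2" "B^2" 0] x2 order_sq[OF Bn] order_0I[OF B0] by simp
  moreover have "order 0 (4*z*w*(w-z)*([:0,1:]*w - z)) = 2 + order 0 R"
    unfolding Qe using R0 order_mult[of "[:0,1:]^2" R 0] x2 by simp
  ultimately show ?thesis by simp
qed

lemma ord1_le:
  fixes z w :: "complex poly"
  assumes nc: "\<not> (poly z 1 = 0 \<and> poly w 1 = 0)" and Q: "4*z*w*(w-z)*([:0,1:]*w - z) \<noteq> 0"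
  defines "D \<equiv> [:0,1:]*w^2 - 2*z*w + z^2"
  shows "D \<noteq> 0 \<and> order 1 (D^2) \<le> order 1 (4*z*w*(w-z)*([:0,1:]*w - z))"
proof (cases "poly (w - z) 1 = 0")
  case False
  have "poly D 1 = (poly w 1 - poly z 1)^2" unfolding D_def by (simp add: power2_eq_square algebra_simps)
  hence "poly D 1 \<noteq> 0" using False by simp
  hence "poly (D^2) 1 \<noteq> 0" by simp
  hence "order 1 (D^2) = 0" by (rule order_0I)
  thus ?thesis using \<open>poly D 1 \<noteq> 0\<close> by auto
next
  case True
  hence w1: "poly w 1 \<noteq> 0" using nc by auto
  define y :: "complex poly" where "y = [:-1,1:]"
  have hx: "[:0,1:] = y + 1" unfolding y_def by (rule poly_eqI) (simp add: coeff_pCons split: nat.splits)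
  from True obtain e where e: "w - z = y * e" using poly_eq_0_iff_dvd[of "w-z" 1] unfolding y_def by (auto elim: dvdE)
  hence ze: "z = w - y * e" by (simp add: algebra_simps)
  define E where "E = w^2 + y*e^2"
  define R where "R = 4*z*w*e*(w+e)"
  have De: "D = y * E" unfolding D_def E_def hx ze by (simp add: algebra_simps power2_eq_square)
  have Qe: "4*z*w*(w-z)*([:0,1:]*w - z) = y^2 * R"
    unfolding R_def hx e by (simp add: ze algebra_simps power2_eq_square)
  have E1: "poly E 1 \<noteq> 0" unfolding E_def y_def using w1 by simp
  hence En: "E \<noteq> 0" by auto
  have R0: "R \<noteq> 0" using Q Qe by auto
  have x1: "order 1 y = 1" using order_power_n_n[of "1::complex" 1] unfolding y_def by simp
  have x2: "order 1 (y^2) = 2" using order_power_n_n[of "1::complex" 2] unfolding y_def by simp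
  have yn: "y \<noteq> 0" unfolding y_def by simp
  have Dn: "D \<noteq> 0" unfolding De using En yn by simp
  have "order 1 D = 1" unfolding De using En yn order_mult[of y E 1] x1 order_0I[OF E1] by simp
  hence "order 1 (D^2) = 2" using order_sq[OF Dn] by simp
  moreover have "order 1 (4*z*w*(w-z)*([:0,1:]*w - z)) = 2 + order 1 R"
    unfolding Qe using R0 yn order_mult[of "y^2" R 1] x2 by simp
  ultimately show ?thesis using Dn by simp
qed

lemma deg1_contra:
  fixes A D Q :: "complex poly"
  assumes An: "A \<noteq> 0" and q0: "q0 \<noteq> 0" and p1: "p1 \<noteq> 0"
    and id: "A^2 - Q = D^2" and rel: "Polynomial.smult q0 (A^2) = Q * [:p0,p1:]"
  shows False
proof -
  define L1 where "L1 = [:p0,p1:]"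
  define L2 where "L2 = [:p0 - q0, p1:]"
  define r where "r = - p0 / p1"
  have L21: "L2 = L1 - [:q0:]" unfolding L1_def L2_def by simp
  have "Q * L2 = Q * L1 - Q * [:q0:]" unfolding L21 by (simp add: right_diff_distrib)
  also have "\<dots> = Polynomial.smult q0 (A^2) - Polynomial.smult q0 Q" using rel unfolding L1_def by simp
  also have "\<dots> = Polynomial.smult q0 (D^2)" unfolding id[symmetric] by (simp add: smult_diff_right)
  finally have QL2: "Q * L2 = Polynomial.smult q0 (D^2)" .
  have rel': "Polynomial.smult q0 (A^2) = Q * L1" using rel unfolding L1_def .
  have "Polynomial.smult q0 (A^2) * L2 = (Q * L2) * L1" by (simp only: rel' mult_ac)
  hence "Polynomial.smult q0 (A^2) * L2 = Polynomial.smult q0 (D^2) * L1" by (simp only: QL2)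
  hence "Polynomial.smult q0 (A^2 * L2) = Polynomial.smult q0 (D^2 * L1)" by simp
  hence eq: "A^2 * L2 = D^2 * L1" by (rule smult_cancel[OF q0])
  have L2n: "L2 \<noteq> 0" unfolding L2_def using p1 by simp
  have L2r: "poly L2 r \<noteq> 0" unfolding L2_def r_def using p1 q0 by (simp add: field_simps)
  have L1e: "L1 = Polynomial.smult p1 [:-r,1:]" unfolding L1_def r_def using p1 by simp
  have oL1: "order r L1 = 1" unfolding L1e using order_smult[OF p1, of r "[:-r,1:]"] order_power_n_n[of r 1] by simp
  have Dn: "D \<noteq> 0" proof assume "D = 0" hence "A^2 * L2 = 0" using eq by simp
    thus False using An L2n by simp qed
  have L1n: "L1 \<noteq> 0" unfolding L1_def using p1 by simp
  have "order r (A^2 * L2) = 2 * order r A"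
    using order_mult[of "A^2" L2 r] An L2n order_sq[OF An] order_0I[OF L2r] by simp
  moreover have "order r (D^2 * L1) = 2 * order r D + 1"
    using order_mult[of "D^2" L1 r] Dn L1n order_sq[OF Dn] oL1 by simp
  ultimately have "2 * order r A = 2 * order r D + 1" using eq by simp
  thus False by presburger
qed



lemma syl_reduce:
  fixes p q :: "complex poly"
  assumes dq: "degree q \<le> n"
  shows "det (sylvester_mat_sub m (Suc n) p q) = coeff p m * det (sylvester_mat_sub m n p q)"
proof -
  define A where "A = sylvester_mat_sub m (Suc n) p q"
  have A: "A \<in> carrier_mat (m + Suc n) (m + Suc n)" unfolding A_def by (rule sylvester_mat_sub_carrier)
  have "det A = (\<Sum>i<m + Suc n. A $$ (i,0) * cofactor A i 0)"
    by (rule laplace_expansion_column[OF A]) simp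
  also have "\<dots> = (\<Sum>i<m + Suc n. if i = 0 then A $$ (0,0) * cofactor A 0 0 else 0)"
  proof (rule sum.cong)
    fix i assume i: "i \<in> {..<m + Suc n}"
    show "A $$ (i,0) * cofactor A i 0 = (if i = 0 then A $$ (0,0) * cofactor A 0 0 else 0)"
    proof (cases "i = 0")
      case False
      have "A $$ (i,0) = 0" unfolding A_def using i False dq
        by (subst sylvester_mat_sub_index) (auto simp: coeff_eq_0)
      thus ?thesis using False by simp
    qed simp
  qed simp
  also have "\<dots> = A $$ (0,0) * cofactor A 0 0" by (subst sum.delta) auto
  also have "A $$ (0,0) = coeff p m" unfolding A_def by (subst sylvester_mat_sub_index) auto
  also have "cofactor A 0 0 = det (sylvester_mat_sub m n p q)"
  proof -
    have "mat_delete A 0 0 = sylvester_mat_sub m n p q"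
    proof (rule eq_matI)
      fix i j assume ij: "i < dim_row (sylvester_mat_sub m n p q)" "j < dim_col (sylvester_mat_sub m n p q)"
      hence ij': "i < m + n" "j < m + n" by auto
      have "mat_delete A 0 0 $$ (i,j) = A $$ (Suc i, Suc j)"
        unfolding mat_delete_def using ij' A by auto
      also have "\<dots> = sylvester_mat_sub m n p q $$ (i,j)"
        unfolding A_def using ij' dq by (auto simp: sylvester_mat_sub_index intro!: coeff_eq_0)
      finally show "mat_delete A 0 0 $$ (i,j) = sylvester_mat_sub m n p q $$ (i,j)" .
    qed (use A in auto)
    thus ?thesis unfolding cofactor_def by simp
  qed
  finally show ?thesis unfolding A_def .
qed

lemma syl_reduce_k:
  fixes p q :: "complex poly"
  assumes dq: "degree q \<le> n"
  shows "det (sylvester_mat_sub m (n + k) p q) = coeff p m ^ k * det (sylvester_mat_sub m n p q)"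
proof (induct k)
  case (Suc k)
  have "det (sylvester_mat_sub m (Suc (n + k)) p q) = coeff p m * det (sylvester_mat_sub m (n+k) p q)"
    by (rule syl_reduce) (use dq in simp)
  thus ?case using Suc by simp
qed simp

lemma hres_nonzero:
  fixes p q :: "complex poly"
  assumes dp: "degree p = d" and pn: "p \<noteq> 0" and dq: "degree q \<le> d"
    and nc: "\<And>a. \<not> (poly p a = 0 \<and> poly q a = 0)"
  shows "det (sylvester_mat_sub d d p q) \<noteq> 0"
proof -
  have "det (sylvester_mat_sub d (degree q + (d - degree q)) p q) = coeff p d ^ (d - degree q) * det (sylvester_mat_sub d (degree q) p q)"
    by (rule syl_reduce_k) simp
  hence e: "det (sylvester_mat_sub d d p q) = lead_coeff p ^ (d - degree q) * resultant p q"
    using dq dp by (simp add: resultant_def sylvester_mat_def)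
  have "degree (gcd p q) = 0"
  proof (rule ccontr)
    assume "degree (gcd p q) \<noteq> 0"
    hence "\<not> constant (poly (gcd p q))" by (simp add: constant_degree)
    then obtain a where "poly (gcd p q) a = 0" using fundamental_theorem_of_algebra by blast
    hence "poly p a = 0" "poly q a = 0" by (auto simp: poly_eq_0_iff_dvd intro: dvd_trans)
    thus False using nc by blast
  qed
  hence "resultant p q \<noteq> 0" using resultant_0_gcd by blast
  thus ?thesis using e pn by simp
qed



lemma hmul: "homogeneous P a \<Longrightarrow> homogeneous Q b \<Longrightarrow> c = a + b \<Longrightarrow> homogeneous (P*Q) c"
  using homogeneous_mult by blast

lemma hpow2: "homogeneous P a \<Longrightarrow> c = 2*a \<Longrightarrow> homogeneous (P^2) c"
  using homogeneous_power[of P a 2] by simp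

lemma hdeg_eq:
  assumes "hom_pair F e" shows "hdeg F = e"
  unfolding hdeg_def
proof (rule the_equality)
  show "hom_pair F e" by fact
  fix e' assume h: "hom_pair F e'"
  show "e' = e"
  proof (cases "fst F = 0")
    case True
    hence "snd F \<noteq> 0" using assms unfolding hom_pair_def by (metis prod.collapse)
    thus ?thesis using h assms unfolding hom_pair_def using homogeneous_deg_unique by blast
  next
    case False
    thus ?thesis using h assms unfolding hom_pair_def using homogeneous_deg_unique by blast
  qed
qed

definition Iv :: "bipoly \<times> bipoly \<Rightarrow> nat \<Rightarrow> bool" where
  "Iv F e \<longleftrightarrow> homogeneous (fst F) e \<and> homogeneous (snd F) e \<and> e \<ge> 1 \<and>
     eval2 (fst F) 1 0 \<noteq> 0 \<and> eval2 (snd F) 1 0 = 0 \<and> eval2 (fst F) 0 1 \<noteq> 0 \<and>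
     eval2 (fst F) 1 1 \<noteq> eval2 (snd F) 1 1 \<and>
     (\<forall>a. \<not> (eval2 (fst F) a 1 = 0 \<and> eval2 (snd F) a 1 = 0))"

lemma zero_case:
  fixes Zf Wf :: "complex \<Rightarrow> complex"
  assumes nc: "\<And>a. \<not> (Zf a = 0 \<and> Wf a = 0)" and z0: "Zf 0 \<noteq> 0" and z1: "Zf 1 \<noteq> Wf 1"
  shows "\<not> ((a * (Wf a)^2 - (Zf a)^2)^2 = 0 \<and> 4 * Zf a * Wf a * (Wf a - Zf a) * (a * Wf a - Zf a) = 0)"
proof
  assume h: "(a * (Wf a)^2 - (Zf a)^2)^2 = 0 \<and> 4 * Zf a * Wf a * (Wf a - Zf a) * (a * Wf a - Zf a) = 0"
  define Z where "Z = Zf a"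
  define W where "W = Wf a"
  have e1: "a * W^2 = Z^2" using h unfolding Z_def W_def by simp
  have e2: "Z = 0 \<or> W = 0 \<or> W = Z \<or> a * W = Z" using h unfolding Z_def W_def by auto
  have nzw: "\<not> (Z = 0 \<and> W = 0)" using nc unfolding Z_def W_def by blast
  show False
  proof -
    { assume "Z = 0"
      hence "W \<noteq> 0" using nzw by auto
      hence "a = 0" using e1 \<open>Z = 0\<close> by simp
      hence False using z0 \<open>Z = 0\<close> unfolding Z_def by simp }
    moreover
    { assume "W = 0" hence "Z = 0" using e1 by simp hence False using \<open>W = 0\<close> nzw by simp }
    moreover
    { assume "W = Z" "Z \<noteq> 0"
      hence "a = 1" using e1 by (simp add: power2_eq_square)
      hence False using z1 \<open>W = Z\<close> unfolding Z_def W_def by simp }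
    moreover
    { assume "a * W = Z" "W \<noteq> 0" "Z \<noteq> 0"
      have "Z^2 = (a*W)^2" using \<open>a * W = Z\<close> by simp
      hence "a * W^2 = a^2 * W^2" using e1 by (simp add: power_mult_distrib)
      hence "a = a^2" using \<open>W \<noteq> 0\<close> by simp
      hence "a = 0 \<or> a = 1" by (metis power2_eq_square mult_cancel_right1 mult_zero_left)
      hence False using \<open>a * W = Z\<close> \<open>Z \<noteq> 0\<close> z1 unfolding Z_def W_def by auto }
    ultimately show False using e2 nzw by blast
  qed
qed

lemma sq_diff_case:
  fixes a b :: complex
  assumes "(b^2 - a^2)^2 = 4 * a * b * (b - a) * (b - a)"
  shows "a = b"
proof -
  have "(b - a)^4 = (b^2 - a^2)^2 - 4 * a * b * (b - a) * (b - a)"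
    by (simp add: eval_nat_numeral algebra_simps)
  hence "(b - a)^4 = 0" using assms by simp
  thus ?thesis by simp
qed

lemma step:
  assumes I: "Iv F e"
  shows "T2^2 dvd fst (Fmap F) \<and> T2^2 dvd snd (Fmap F) \<and> Iv (pair_div (Fmap F) (T2^2)) (4*e)"
proof -
  obtain z w where F: "F = (z, w)" by (cases F)
  have hz: "homogeneous z e" and hw: "homogeneous w e" and e1: "e \<ge> 1"
    and z10: "eval2 z 1 0 \<noteq> 0" and w10: "eval2 w 1 0 = 0" and z01: "eval2 z 0 1 \<noteq> 0"
    and z11: "eval2 z 1 1 \<noteq> eval2 w 1 1" and nc: "\<And>a. \<not> (eval2 z a 1 = 0 \<and> eval2 w a 1 = 0)"
    using I unfolding Iv_def F by auto
  have "coeff (dehom w) e = 0" using w10 eval2_10[OF hw] by simp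
  then obtain w' where hw': "homogeneous w' (e-1)" and w: "w = T2 * w'" using t2_factor[OF hw e1] by blast
  define A where "A = T1 * T2 * w'^2 - z^2"
  define Q where "Q = 4 * T2 * z * w' * (T2 * w' - z) * (T1 * w' - z)"
  have fm: "Fmap F = (T2^2 * A^2, T2^2 * Q)"
    unfolding Fmap_def F A_def Q_def w Let_def by (simp add: algebra_simps power2_eq_square)
  have T2n: "T2 \<noteq> 0" unfolding T2_def by simp
  have pd: "pair_div (Fmap F) (T2^2) = (A^2, Q)" unfolding fm pair_div_def using T2n by simp
  have t12: "homogeneous (T1 * T2) 2" by (rule hmul[OF homogeneous_T1 homogeneous_T2]) simp
  have w2: "homogeneous (w'^2) (2*(e-1))" by (rule hpow2[OF hw']) simp
  have a1: "homogeneous (T1 * T2 * w'^2) (2*e)" by (rule hmul[OF t12 w2]) (use e1 in simp)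
  have a2: "homogeneous (z^2) (2*e)" by (rule hpow2[OF hz]) simp
  have hA: "homogeneous A (2*e)" unfolding A_def by (rule homogeneous_diff[OF a1 a2])
  have q1: "homogeneous (4 * T2 * z * w') (1 + e + (e-1))"
    by (rule hmul[OF hmul[OF hmul[OF homogeneous_numeral homogeneous_T2] hz] hw']) simp_all
  have q2: "homogeneous (T2 * w' - z) e"
    by (rule homogeneous_diff[OF hmul[OF homogeneous_T2 hw'] hz]) (use e1 in simp)
  have q3: "homogeneous (T1 * w' - z) e"
    by (rule homogeneous_diff[OF hmul[OF homogeneous_T1 hw'] hz]) (use e1 in simp)
  have hQ: "homogeneous Q (4*e)" unfolding Q_def
    by (rule hmul[OF hmul[OF q1 q2, of "1 + e + (e-1) + e"] q3]) (use e1 in linarith)+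
  have hA2: "homogeneous (A^2) (4*e)" by (rule hpow2[OF hA]) simp
  have ww': "eval2 w a b = b * eval2 w' a b" for a b unfolding w by simp
  have i1: "eval2 (A^2) 1 0 \<noteq> 0" unfolding A_def using z10 by simp
  have i2: "eval2 Q 1 0 = 0" unfolding Q_def by simp
  have i3: "eval2 (A^2) 0 1 \<noteq> 0" unfolding A_def using z01 by simp
  have i4: "eval2 (A^2) 1 1 \<noteq> eval2 Q 1 1"
  proof
    assume "eval2 (A^2) 1 1 = eval2 Q 1 1"
    hence "((eval2 w' 1 1)^2 - (eval2 z 1 1)^2)^2 = 4 * eval2 z 1 1 * eval2 w' 1 1 * (eval2 w' 1 1 - eval2 z 1 1) * (eval2 w' 1 1 - eval2 z 1 1)"
      unfolding A_def Q_def by simp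
    hence "eval2 z 1 1 = eval2 w' 1 1" by (rule sq_diff_case)
    thus False using z11 ww'[of 1 1] by simp
  qed
  have i5: "\<not> (eval2 (A^2) a 1 = 0 \<and> eval2 Q a 1 = 0)" for a
  proof -
    have "\<not> ((a * (eval2 w' a 1)^2 - (eval2 z a 1)^2)^2 = 0 \<and>
        4 * eval2 z a 1 * eval2 w' a 1 * (eval2 w' a 1 - eval2 z a 1) * (a * eval2 w' a 1 - eval2 z a 1) = 0)"
      by (rule zero_case[where Zf = "\<lambda>a. eval2 z a 1" and Wf = "\<lambda>a. eval2 w' a 1"])
        (use nc ww' z01 z11 in auto)
    thus ?thesis unfolding A_def Q_def by simp
  qed
  have "Iv (A^2, Q) (4*e)" unfolding Iv_def using hA2 hQ e1 i1 i2 i3 i4 i5 by auto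
  thus ?thesis unfolding pd using fm by simp
qed



lemma key_identity:
  fixes x z w :: "'a::comm_ring_1"
  shows "(x*w^2 - z^2)^2 - 4*z*w*(w-z)*(x*w - z) = (x*w^2 - 2*z*w + z^2)^2"
  by (simp add: eval_nat_numeral algebra_simps)

lemma deg_le1: "degree (p::complex poly) \<le> 1 \<Longrightarrow> p = [:coeff p 0, coeff p 1:]"
  by (rule poly_eqI) (auto simp: coeff_pCons coeff_eq_0 split: nat.splits)

lemma deg_0: "degree (p::complex poly) = 0 \<Longrightarrow> p = [:coeff p 0:]"
  by (rule poly_eqI) (auto simp: coeff_pCons coeff_eq_0 split: nat.splits)

lemma F1_props:
  assumes lift: "hom_lift C c"
    and c_ne: "c \<noteq> 0" "c \<noteq> 1" "c \<noteq> Fract [:0, 1:] 1"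
  shows "\<exists>e. hom_pair (Fiter C 1) e \<and> e \<ge> 2 \<and> Iv (Fiter C 1) e"
proof -
  obtain z w where C: "C = (z, w)" by (cases C)
  from lift obtain k where hz: "homogeneous z k" and hw: "homogeneous w k" and cop: "coprime z w"
    and wt0: "dehom w \<noteq> 0" and c: "c = Fract (dehom z) (dehom w)"
    unfolding hom_lift_def C by auto
  define zt where "zt = dehom z"
  define wt where "wt = dehom w"
  have wt0': "wt \<noteq> 0" using wt0 unfolding wt_def .
  have zt0: "zt \<noteq> 0"
  proof
    assume "zt = 0" hence "c = 0" unfolding c zt_def[symmetric] by (simp add: Zero_fract_def eq_fract)
    thus False using c_ne by simp
  qed
  have wz: "wt - zt \<noteq> 0"
  proof
    assume "wt - zt = 0" hence "c = 1" unfolding c zt_def[symmetric] wt_def[symmetric] using wt0'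
      by (simp add: One_fract_def eq_fract)
    thus False using c_ne by simp
  qed
  have xwz: "[:0,1:]*wt - zt \<noteq> 0"
  proof
    assume "[:0,1:]*wt - zt = 0" hence "zt = [:0,1:]*wt" by simp
    hence "c = Fract [:0,1:] 1" unfolding c zt_def[symmetric] wt_def[symmetric] using wt0'
      by (simp add: eq_fract)
    thus False using c_ne by simp
  qed
  define P where "P = (T1 * w^2 - T2 * z^2)^2"
  define Q where "Q = 4 * T2 * z * w * (w - z) * (T1 * w - T2 * z)"
  have fm: "Fmap C = (P, Q)" unfolding Fmap_def C P_def Q_def Let_def by simp
  define N where "N = 2 * (1 + 2 * k)"
  have hP: "homogeneous P N" unfolding P_def N_def
    apply (rule hpow2[OF homogeneous_diff]) 
      apply (rule hmul[OF homogeneous_T1 hpow2[OF hw]]; simp)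
     apply (rule hmul[OF homogeneous_T2 hpow2[OF hz]]; simp)
    by simp
  have hQ: "homogeneous Q N" unfolding Q_def N_def
    apply (rule hmul[OF hmul[OF hmul[OF hmul[OF hmul[OF homogeneous_numeral homogeneous_T2] hz] hw]
          homogeneous_diff[OF hw hz]] homogeneous_diff[OF hmul[OF homogeneous_T1 hw] hmul[OF homogeneous_T2 hz]]])
    by (simp_all, linarith?)
  have dP: "dehom P = ([:0,1:]*wt^2 - zt^2)^2" unfolding P_def zt_def wt_def by simp
  have dQ: "dehom Q = 4*zt*wt*(wt-zt)*([:0,1:]*wt - zt)" unfolding Q_def zt_def wt_def by simp
  have dQn: "dehom Q \<noteq> 0" unfolding dQ using zt0 wt0' wz xwz by simp
  have dPn: "dehom P \<noteq> 0" unfolding dP using A_nz[OF wt0'] by simp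
  have Qn: "Q \<noteq> 0" using dQn by auto
  define g where "g = gcd P Q"
  have gn: "g \<noteq> 0" unfolding g_def using Qn by simp
  obtain m where hg: "homogeneous g m" unfolding g_def using gcd_homogeneous[OF hP hQ] Qn by blast
  define P1 where "P1 = P div g"
  define Q1 where "Q1 = Q div g"
  have Pe: "P = g * P1" unfolding P1_def g_def by simp
  have Qe: "Q = g * Q1" unfolding Q1_def g_def by simp
  define d where "d = N - m"
  have hP1: "homogeneous P1 d" unfolding d_def by (rule homogeneous_cofactor[OF _ hg gn]) (use hP Pe in simp)
  have hQ1: "homogeneous Q1 d" unfolding d_def by (rule homogeneous_cofactor[OF _ hg gn]) (use hQ Qe in simp)
  have cop1: "coprime P1 Q1" unfolding P1_def Q1_def g_def by (rule div_gcd_coprime) (use Qn in simp)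
  have F1: "Fiter C 1 = (P1, Q1)" unfolding P1_def Q1_def g_def
    by (simp add: fm pair_div_def pgcd_def)
  have Q1n: "Q1 \<noteq> 0" using Qn Qe by auto
  have hp: "hom_pair (Fiter C 1) d" unfolding F1 hom_pair_def using hP1 hQ1 Q1n by simp
  define gt where "gt = dehom g"
  define p1 where "p1 = dehom P1"
  define q1 where "q1 = dehom Q1"
  have gtn: "gt \<noteq> 0" unfolding gt_def using dehom_eq_0[OF hg] gn by blast
  have dPe: "dehom P = gt * p1" unfolding gt_def p1_def Pe by simp
  have dQe: "dehom Q = gt * q1" unfolding gt_def q1_def Qe by simp
  have p1n: "p1 \<noteq> 0" using dPn dPe by auto
  have q1n: "q1 \<noteq> 0" using dQn dQe by auto
  have ncz: "\<And>a. \<not> (poly zt a = 0 \<and> poly wt a = 0)" unfolding zt_def wt_def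
    using no_common_zero(1)[OF hz hw cop] by blast
  have nc1: "\<And>a. \<not> (poly p1 a = 0 \<and> poly q1 a = 0)" unfolding p1_def q1_def
    using no_common_zero(1)[OF hP1 hQ1 cop1] by blast
  have nc2: "\<not> (coeff p1 d = 0 \<and> coeff q1 d = 0)" unfolding p1_def q1_def
    using no_common_zero(2)[OF hP1 hQ1 cop1] by blast
  have dp1: "degree p1 \<le> d" unfolding p1_def by (rule degree_dehom_hom[OF hP1])
  have "degree (dehom Q) < degree (dehom P)" unfolding dP dQ by (rule degQ_lt[OF wt0' zt0])
  hence "degree gt + degree q1 < degree gt + degree p1"
    unfolding dPe dQe using gtn p1n q1n by (simp add: degree_mult_eq)
  hence dq1: "degree q1 < d" using dp1 by simp
  hence cq1: "coeff q1 d = 0" by (simp add: coeff_eq_0)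
  have b: "eval2 Q1 1 0 = 0" using eval2_10[OF hQ1] cq1 unfolding q1_def by simp
  have cp1: "coeff p1 d \<noteq> 0" using nc2 cq1 by simp
  have a: "eval2 P1 1 0 \<noteq> 0" using eval2_10[OF hP1] cp1 unfolding p1_def by simp
  have c0: "poly p1 0 \<noteq> 0"
  proof
    assume p0: "poly p1 0 = 0"
    hence "poly q1 0 \<noteq> 0" using nc1 by blast
    hence "order 0 q1 = 0" by (rule order_0I)
    hence oQ: "order 0 (dehom Q) = order 0 gt" unfolding dQe using gtn q1n by (simp add: order_mult)
    have "order 0 p1 \<noteq> 0" using p0 p1n order_root by blast
    hence oP: "order 0 (dehom P) > order 0 gt" unfolding dPe using gtn p1n by (simp add: order_mult)
    have "order 0 (dehom P) \<le> order 0 (dehom Q)" unfolding dP dQ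
      by (rule ord0_le) (use ncz dQn dQ in auto)
    thus False using oP oQ by simp
  qed
  have c: "eval2 P1 0 1 \<noteq> 0" using c0 unfolding p1_def eval2_a1 .
  define Dt where "Dt = [:0,1:]*wt^2 - 2*zt*wt + zt^2"
  have idt: "dehom P - dehom Q = Dt^2" unfolding dP dQ Dt_def by (rule key_identity)
  have d1: "poly p1 1 \<noteq> poly q1 1"
  proof
    assume eq: "poly p1 1 = poly q1 1"
    hence nz: "poly q1 1 \<noteq> 0" using nc1 by auto
    hence "order 1 q1 = 0" by (rule order_0I)
    hence oQ: "order 1 (dehom Q) = order 1 gt" unfolding dQe using gtn q1n by (simp add: order_mult)
    have o: "Dt \<noteq> 0 \<and> order 1 (Dt^2) \<le> order 1 (dehom Q)" unfolding dQ Dt_def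
      by (rule ord1_le) (use ncz dQn dQ in auto)
    have De: "Dt^2 = gt * (p1 - q1)" unfolding idt[symmetric] dPe dQe by (simp add: algebra_simps)
    have pqn: "p1 - q1 \<noteq> 0" using o De by auto
    have "poly (p1 - q1) 1 = 0" using eq by simp
    hence "order 1 (p1 - q1) \<noteq> 0" using pqn order_root by blast
    hence "order 1 (Dt^2) > order 1 gt" unfolding De using gtn pqn by (simp add: order_mult)
    thus False using o oQ by simp
  qed
  have d: "eval2 P1 1 1 \<noteq> eval2 Q1 1 1" using d1 unfolding p1_def q1_def eval2_a1 .
  have nce: "\<forall>a. \<not> (eval2 P1 a 1 = 0 \<and> eval2 Q1 a 1 = 0)" using nc1 unfolding p1_def q1_def eval2_a1 by blast
  have d2: "d \<ge> 2"
  proof (rule ccontr)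
    assume "\<not> d \<ge> 2"
    hence d1: "d = 1" using dq1 by linarith
    hence "degree q1 = 0" using dq1 by simp
    hence q1e: "q1 = [:coeff q1 0:]" by (rule deg_0)
    have q0: "coeff q1 0 \<noteq> 0" using q1n q1e by (metis pCons_0_0)
    have p1e: "p1 = [:coeff p1 0, coeff p1 1:]" using dp1 d1 by (intro deg_le1) simp
    have pc1: "coeff p1 1 \<noteq> 0" using cp1 d1 by simp
    have "Polynomial.smult (coeff q1 0) (dehom P) = dehom Q * p1"
    proof -
      have "Polynomial.smult (coeff q1 0) (dehom P) = gt * (q1 * p1)"
        unfolding dPe by (subst q1e) simp
      also have "\<dots> = dehom Q * p1" unfolding dQe by (simp add: mult_ac)
      finally show ?thesis .
    qed
    hence rel: "Polynomial.smult (coeff q1 0) (([:0,1:]*wt^2 - zt^2)^2) = dehom Q * [:coeff p1 0, coeff p1 1:]"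
      unfolding dP using p1e by simp
    have id2: "([:0,1:]*wt^2 - zt^2)^2 - dehom Q = Dt^2" using idt unfolding dP .
    show False by (rule deg1_contra[OF A_nz[OF wt0'] q0 pc1 id2 rel])
  qed
  have "Iv (Fiter C 1) d" unfolding Iv_def F1 using hP1 hQ1 d2 a b c d nce by simp
  thus ?thesis using hp d2 by blast
qed



lemma Iv_res:
  assumes I: "Iv G E"
  shows "hom_pair G E \<and> hdeg G = E \<and> hresultant G \<noteq> 0"
proof -
  have hf: "homogeneous (fst G) E" and hs: "homogeneous (snd G) E"
    and f10: "eval2 (fst G) 1 0 \<noteq> 0" and nc: "\<And>a. \<not> (eval2 (fst G) a 1 = 0 \<and> eval2 (snd G) a 1 = 0)"
    using I unfolding Iv_def by auto
  have fn: "fst G \<noteq> 0" using f10 by auto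
  have hp: "hom_pair G E" unfolding hom_pair_def using hf hs fn by (metis prod.collapse fst_conv)
  have hd: "hdeg G = E" by (rule hdeg_eq[OF hp])
  have c: "coeff (dehom (fst G)) E \<noteq> 0" using f10 eval2_10[OF hf] by simp
  have dle: "degree (dehom (fst G)) \<le> E" by (rule degree_dehom_hom[OF hf])
  have dp: "degree (dehom (fst G)) = E" using dle le_degree[OF c] by simp
  have pn: "dehom (fst G) \<noteq> 0" using c by auto
  have "det (sylvester_mat_sub E E (dehom (fst G)) (dehom (snd G))) \<noteq> 0"
    by (rule hres_nonzero[OF dp pn degree_dehom_hom[OF hs]]) (use nc in \<open>simp add: eval2_a1\<close>)
  hence "hresultant G \<noteq> 0" unfolding hresultant_def hd .
  thus ?thesis using hp hd by simp
qed

theorem proposition3p1: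
  fixes C :: "bipoly \<times> bipoly" and c :: "complex poly fract"
  assumes lift: "hom_lift C c"
    and c_ne: "c \<noteq> 0" "c \<noteq> 1" "c \<noteq> Fract [:0, 1:] 1"
  defines "F1 \<equiv> Fiter C 1"
  defines "d \<equiv> hdeg F1"
  shows "hom_pair F1 d \<and> d \<ge> 2 \<and>
         eval2 (fst F1) 0 1 \<noteq> 0 \<and> eval2 (fst F1) 1 0 \<noteq> 0 \<and>
         eval2 (fst F1) 1 1 \<noteq> eval2 (snd F1) 1 1 \<and> eval2 (snd F1) 1 0 = 0 \<and>
         (\<forall>n\<ge>1. T2^2 dvd fst (Fmap (Fiter C n)) \<and> T2^2 dvd snd (Fmap (Fiter C n)) \<and>
                 hom_pair (Fiter C (n + 1)) (4^n * d) \<and>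
                 hdeg (Fiter C (n + 1)) = 4^n * d \<and>
                 hresultant (Fiter C (n + 1)) \<noteq> 0)"
proof -
  obtain e where hp: "hom_pair F1 e" and e2: "e \<ge> 2" and I1: "Iv F1 e"
    using F1_props[OF lift c_ne] unfolding F1_def by blast
  have de: "d = e" unfolding d_def by (rule hdeg_eq[OF hp])
  have it: "Iv (Fiter C (Suc m)) (4^m * e)" for m
  proof (induct m)
    case 0 thus ?case using I1 unfolding F1_def by simp
  next
    case (Suc m)
    have "Iv (pair_div (Fmap (Fiter C (Suc m))) (T2^2)) (4 * (4^m * e))" using step[OF Suc] by blast
    thus ?case by (simp add: mult.assoc)
  qed
  have rest: "T2^2 dvd fst (Fmap (Fiter C n)) \<and> T2^2 dvd snd (Fmap (Fiter C n)) \<and>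
                 hom_pair (Fiter C (n + 1)) (4^n * d) \<and>
                 hdeg (Fiter C (n + 1)) = 4^n * d \<and>
                 hresultant (Fiter C (n + 1)) \<noteq> 0" if n1: "n \<ge> 1" for n
  proof -
    obtain m where n: "n = Suc m" using n1 by (cases n) auto
    have "T2^2 dvd fst (Fmap (Fiter C n)) \<and> T2^2 dvd snd (Fmap (Fiter C n))"
      using step[OF it[of m]] unfolding n by blast
    moreover have "hom_pair (Fiter C (n + 1)) (4^n * d) \<and> hdeg (Fiter C (n + 1)) = 4^n * d \<and>
                 hresultant (Fiter C (n + 1)) \<noteq> 0"
      using Iv_res[OF it[of n]] de by simp
    ultimately show ?thesis by blast
  qed
  show ?thesis using hp e2 I1 rest unfolding de Iv_def by blast
qed

end
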